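(* Let $U,V\in\mathcal S$ and $\gamma\in\Gamma$. Then $\mathcal D(\gamma U,\gamma V)=\gamma\,\mathcal D(U,V)\,\gamma^{-1}$.
   Context: $\mathcal H$ = entire functions (uniform convergence on compacta). $\mathcal S$ = linear subspaces $V\subset\mathbb C[z]$ with $\rho\,\mathbb C[z]\subset V$ for some nonzero polynomial $\rho$. $\Gamma=\{e^{p(z)}:p\in\mathbb C[z]\}$, acting on $\mathcal S$ by $\gamma V=(\gamma\overline V)\cap\mathbb C[z]$, where $\overline V$ is the closure of $V$ in $\mathcal H$. For subspaces $U,V$, $\mathcal D(U,V)=\{D\in\mathbb C(z)[\partial]: D.U\subset V\}$, $\partial=d/dz$; $\gamma\mathcal D(U,V)\gamma^{-1}$ means conjugation by the multiplication operator $\gamma$. *)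

theory Defs
  imports "HOL-Analysis.Analysis" "HOL-Computational_Algebra.Computational_Algebra" "HOL-Computational_Algebra.Field_as_Ring"
begin

definition entire :: "(complex \<Rightarrow> complex) \<Rightarrow> bool" where
  "entire f \<longleftrightarrow> f holomorphic_on UNIV"

(* Closure in H (topology of uniform convergence on compacta) of a set V of
   polynomials (identified with the entire functions they define):
   f is in the closure iff every basic neighbourhood
   {g. sup_K |g - f| < eps} (K compact, eps > 0) meets V. *)
definition H_closure :: "complex poly set \<Rightarrow> (complex \<Rightarrow> complex) set" where
  "H_closure V = {f. entire f \<and>
     (\<forall>K. compact K \<longrightarrow> (\<forall>e>0. \<exists>v\<in>V. \<forall>z\<in>K. norm (f z - poly v z) < e))}"

definition classS :: "complex poly set set" where
  "classS = {V. 0 \<in> V \<and> (\<forall>u\<in>V. \<forall>v\<in>V. u + v \<in> V) \<and> (\<forall>c. \<forall>v\<in>V. smult c v \<in> V)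
              \<and> (\<exists>rho. rho \<noteq> 0 \<and> (\<forall>q. rho * q \<in> V))}"

(* Action of gamma = exp(p(z)) \<in> Gamma on subspaces:
   gamma V = (gamma * closure V) \<inter> C[z]. *)
definition gamma_act :: "complex poly \<Rightarrow> complex poly set \<Rightarrow> complex poly set" where
  "gamma_act p V = {q. \<exists>f\<in>H_closure V. \<forall>z. poly q z = exp (poly p z) * f z}"

(* Differential operators in C(z)[d]:  D = sum_k r_k d^k with r_k \<in> C(z).
   Represented by the (unique) coefficient sequence r_k = coeff D k; the type
   'poly' is used only as a container for finitely supported coefficient
   sequences (its ring multiplication is never used). *)
type_synonym diffop = "complex poly fract poly"

definition op_apply :: "diffop \<Rightarrow> complex poly \<Rightarrow> complex poly fract" where
  "op_apply D u = (\<Sum>k\<le>degree D. coeff D k * to_fract ((pderiv ^^ k) u))"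

definition Dops :: "complex poly set \<Rightarrow> complex poly set \<Rightarrow> diffop set" where
  "Dops U V = {D. \<forall>u\<in>U. \<exists>v\<in>V. op_apply D u = to_fract v}"

definition rat_eval :: "complex poly fract \<Rightarrow> complex \<Rightarrow> complex" where
  "rat_eval r z = poly (fst (quot_of_fract r)) z / poly (snd (quot_of_fract r)) z"

definition rat_pole :: "complex poly fract \<Rightarrow> complex \<Rightarrow> bool" where
  "rat_pole r z \<longleftrightarrow> poly (snd (quot_of_fract r)) z = 0"

definition op_eval :: "diffop \<Rightarrow> (complex \<Rightarrow> complex) \<Rightarrow> complex \<Rightarrow> complex" where
  "op_eval D f z = (\<Sum>k\<le>degree D. rat_eval (coeff D k) z * (deriv ^^ k) f z)"

definition op_regular_at :: "diffop \<Rightarrow> complex \<Rightarrow> bool" where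
  "op_regular_at D z \<longleftrightarrow> (\<forall>k. \<not> rat_pole (coeff D k) z)"

(* E = gamma D gamma^{-1} (conjugation by the multiplication operator
   gamma = exp(p(z))), as operators: for every entire f and every point z
   where the coefficients of D and E are regular,
   E f (z) = gamma(z) * D (gamma^{-1} f) (z). *)
definition conj_op :: "complex poly \<Rightarrow> diffop \<Rightarrow> diffop \<Rightarrow> bool" where
  "conj_op p D E \<longleftrightarrow> (\<forall>f. entire f \<longrightarrow> (\<forall>z. op_regular_at D z \<and> op_regular_at E z \<longrightarrow>
      op_eval E f z = exp (poly p z) * op_eval D (\<lambda>w. exp (- poly p w) * f w) z))"

end

theory Submission
  imports Defs "HOL-Complex_Analysis.Complex_Analysis"
begin


definition goodrep :: "complex poly fract \<Rightarrow> complex \<Rightarrow> bool" where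
  "goodrep r z \<longleftrightarrow> (\<exists>n d. r = Fract n d \<and> poly d z \<noteq> 0)"

lemma qof_rep: "\<exists>n' d'. quot_of_fract r = (n', d')" by auto

lemma goodrep_eval:
  assumes "r = Fract n d" "poly d z \<noteq> 0"
  shows "\<not> rat_pole r z \<and> rat_eval r z = poly n z / poly d z"
proof -
  obtain n' d' where q: "quot_of_fract r = (n', d')" by (cases "quot_of_fract r") auto
  have d'0: "d' \<noteq> 0" using snd_quot_of_fract_nonzero[of r] q by simp
  have d0: "d \<noteq> 0" using assms(2) by auto
  have r': "r = Fract n' d'" using Fract_quot_of_fract[of r] q by simp
  have "Fract n d = Fract n' d'" using assms(1) r' by simp
  hence eq: "n * d' = n' * d" using eq_fract(1)[OF d0 d'0] by simp
  have cop: "coprime n' d'" using coprime_quot_of_fract[of r] q by simp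
  have "d' dvd n' * d" using eq by (metis dvd_triv_right)
  hence "d' dvd d" using cop by (metis coprime_commute coprime_dvd_mult_right_iff)
  then obtain k where "d = d' * k" by (auto elim: dvdE)
  hence pd': "poly d' z \<noteq> 0" using assms(2) by auto
  have "poly n z * poly d' z = poly n' z * poly d z" using arg_cong[OF eq, of "\<lambda>p. poly p z"] by simp
  hence "poly n' z / poly d' z = poly n z / poly d z" using pd' assms(2)
    by (simp add: field_simps)
  thus ?thesis using pd' q unfolding rat_pole_def rat_eval_def by simp
qed

lemma nonpole_goodrep: "\<not> rat_pole r z \<Longrightarrow> goodrep r z"
  unfolding goodrep_def rat_pole_def
  by (metis Fract_quot_of_fract)

lemma goodrep_nonpole: "goodrep r z \<Longrightarrow> \<not> rat_pole r z"
  unfolding goodrep_def using goodrep_eval by blast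

lemma rat_eval_add:
  assumes "\<not> rat_pole a z" "\<not> rat_pole b z"
  shows "\<not> rat_pole (a + b) z \<and> rat_eval (a + b) z = rat_eval a z + rat_eval b z"
proof -
  obtain n d where a: "a = Fract n d" "poly d z \<noteq> 0" using nonpole_goodrep[OF assms(1)] goodrep_def by auto
  obtain m e where b: "b = Fract m e" "poly e z \<noteq> 0" using nonpole_goodrep[OF assms(2)] goodrep_def by auto
  have d0: "d \<noteq> 0" "e \<noteq> 0" using a b by auto
  have "a + b = Fract (n * e + m * d) (d * e)" using a b d0 by simp
  moreover have "poly (d * e) z \<noteq> 0" using a b by simp
  ultimately have "\<not> rat_pole (a+b) z \<and> rat_eval (a+b) z = poly (n * e + m * d) z / poly (d * e) z"
    using goodrep_eval by blast
  moreover have "rat_eval a z = poly n z / poly d z" "rat_eval b z = poly m z / poly e z"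
    using goodrep_eval[OF a] goodrep_eval[OF b] by auto
  ultimately show ?thesis using a(2) b(2) by (simp add: add_frac_eq algebra_simps)
qed

lemma rat_eval_mult:
  assumes "\<not> rat_pole a z" "\<not> rat_pole b z"
  shows "\<not> rat_pole (a * b) z \<and> rat_eval (a * b) z = rat_eval a z * rat_eval b z"
proof -
  obtain n d where a: "a = Fract n d" "poly d z \<noteq> 0" using nonpole_goodrep[OF assms(1)] goodrep_def by auto
  obtain m e where b: "b = Fract m e" "poly e z \<noteq> 0" using nonpole_goodrep[OF assms(2)] goodrep_def by auto
  have "a * b = Fract (n * m) (d * e)" using a b by simp
  moreover have "poly (d * e) z \<noteq> 0" using a b by simp
  ultimately have "\<not> rat_pole (a*b) z \<and> rat_eval (a*b) z = poly (n * m) z / poly (d * e) z"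
    using goodrep_eval by blast
  moreover have "rat_eval a z = poly n z / poly d z" "rat_eval b z = poly m z / poly e z"
    using goodrep_eval[OF a] goodrep_eval[OF b] by auto
  ultimately show ?thesis using a(2) b(2) by simp
qed

lemma rat_eval_to_fract: "\<not> rat_pole (to_fract q) z \<and> rat_eval (to_fract q) z = poly q z"
  using goodrep_eval[of "to_fract q" q 1 z] by (simp add: to_fract_def)

lemma rat_eval_0: "\<not> rat_pole 0 z \<and> rat_eval 0 z = 0"
  using rat_eval_to_fract[of 0 z] by simp

lemma rat_eval_sum:
  assumes "finite A" "\<And>i. i \<in> A \<Longrightarrow> \<not> rat_pole (f i) z"
  shows "\<not> rat_pole (sum f A) z \<and> rat_eval (sum f A) z = (\<Sum>i\<in>A. rat_eval (f i) z)"
  using assms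
proof (induction A rule: finite_induct)
  case empty then show ?case using rat_eval_0 by simp
next
  case (insert x F)
  then show ?case using rat_eval_add[of "f x" z "sum f F"] by simp
qed



lemma ev_notin: "finite Z \<Longrightarrow> eventually (\<lambda>z. z \<notin> Z) (at (a::complex))"
  by (metis finite_imp_sparse iso_tuple_UNIV_I open_UNIV sparse_in_eventually_iff)

lemma cont_eq_cofinite:
  fixes f g :: "complex \<Rightarrow> complex"
  assumes "continuous_on UNIV f" "continuous_on UNIV g" "finite Z" "\<forall>z. z \<notin> Z \<longrightarrow> f z = g z"
  shows "f a = g a"
proof -
  have f: "(f \<longlongrightarrow> f a) (at a)" using assms(1) by (simp add: continuous_on_def)
  have g: "(g \<longlongrightarrow> g a) (at a)" using assms(2) by (simp add: continuous_on_def)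
  have "eventually (\<lambda>z. g z = f z) (at a)"
    using ev_notin[OF assms(3)] by (rule eventually_mono) (use assms(4) in auto)
  hence "(f \<longlongrightarrow> g a) (at a)" using g tendsto_cong by blast
  thus ?thesis using f tendsto_unique trivial_limit_at by blast
qed

lemma polydiv:
  fixes w rho :: "complex poly"
  assumes "rho \<noteq> 0" "continuous_on UNIV g" "\<forall>z. poly w z = poly rho z * g z"
  shows "rho dvd w"
  using assms
proof (induction "degree rho" arbitrary: rho w g rule: less_induct)
  case less
  show ?case
  proof (cases "degree rho = 0")
    case True
    hence "is_unit rho" using less.prems(1) is_unit_iff_degree by blast
    thus ?thesis by (simp add: unit_imp_dvd)
  next
    case False
    then obtain a where a: "poly rho a = 0" using alg_closed_imp_poly_has_root by blast
    then obtain rho' where rho: "rho = [:-a,1:] * rho'" using poly_eq_0_iff_dvd by (metis dvdE)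
    have "poly w a = 0" using less.prems(3) a by simp
    then obtain w' where w: "w = [:-a,1:] * w'" using poly_eq_0_iff_dvd by (metis dvdE)
    have r0: "rho' \<noteq> 0" using less.prems(1) rho by auto
    have "degree ([:-a,1:] * rho') = degree [:-a,1:] + degree rho'" using r0 by (intro degree_mult_eq) auto
    hence deg: "degree rho' < degree rho" using rho by simp
    have "\<forall>z. z \<notin> {a} \<longrightarrow> poly w' z = poly rho' z * g z"
    proof (intro allI impI)
      fix z assume "z \<notin> {a}"
      hence "z - a \<noteq> 0" by simp
      moreover have "(z - a) * poly w' z = (z - a) * (poly rho' z * g z)"
        using less.prems(3) w rho by (simp add: algebra_simps)
      ultimately show "poly w' z = poly rho' z * g z" by simp
    qed
    moreover have c1: "continuous_on UNIV (\<lambda>z. poly w' z)" by (intro continuous_intros)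
    moreover have c2: "continuous_on UNIV (\<lambda>z. poly rho' z * g z)" by (intro continuous_intros less.prems(2))
    ultimately have "\<forall>z. poly w' z = poly rho' z * g z"
      using cont_eq_cofinite[OF c1 c2, of "{a}"] by auto
    hence "rho' dvd w'" using less.hyps[OF deg r0 less.prems(2)] by blast
    hence "[:-a,1:] * rho' dvd [:-a,1:] * w'" by (rule mult_dvd_mono[OF dvd_refl])
    thus ?thesis using rho w by simp
  qed
qed

lemma fract_poly:
  assumes "finite Z" "continuous_on UNIV h"
    "\<forall>z. z \<notin> Z \<longrightarrow> \<not> rat_pole r z \<and> rat_eval r z = h z"
  shows "\<exists>v. r = to_fract v \<and> (\<forall>z. poly v z = h z)"
proof -
  obtain n d where q: "quot_of_fract r = (n, d)" by (cases "quot_of_fract r") auto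
  have d0: "d \<noteq> 0" using snd_quot_of_fract_nonzero[of r] q by simp
  have r: "r = Fract n d" using Fract_quot_of_fract[of r] q by simp
  have "\<forall>z. z \<notin> Z \<longrightarrow> poly n z = poly d z * h z"
  proof (intro allI impI)
    fix z assume "z \<notin> Z"
    hence "poly d z \<noteq> 0" "poly n z / poly d z = h z" using assms(3) q
      unfolding rat_pole_def rat_eval_def by auto
    thus "poly n z = poly d z * h z" by (simp add: field_simps)
  qed
  moreover have c1: "continuous_on UNIV (\<lambda>z. poly n z)" by (intro continuous_intros)
  moreover have c2: "continuous_on UNIV (\<lambda>z. poly d z * h z)" by (intro continuous_intros assms(2))
  ultimately have all: "\<forall>z. poly n z = poly d z * h z"
    using cont_eq_cofinite[OF c1 c2 assms(1)] by auto
  hence "d dvd n" using polydiv d0 assms(2) by blast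
  moreover have "coprime n d" using coprime_quot_of_fract[of r] q by simp
  ultimately have "is_unit d" by (meson coprime_common_divisor dvd_refl)
  moreover have "normalize d = d" using normalize_snd_quot_of_fract[of r] q by simp
  ultimately have "d = 1" by (metis is_unit_normalize)
  thus ?thesis using r all by (auto simp: to_fract_def)
qed

lemma deriv_poly_iter: "(deriv ^^ k) (poly (u::complex poly)) = poly ((pderiv ^^ k) u)"
proof (induction k)
  case 0 then show ?case by simp
next
  case (Suc k)
  have *: "deriv (poly q) = poly (pderiv q)" for q :: "complex poly"
    by (rule ext) (rule DERIV_imp_deriv, rule poly_DERIV)
  show ?case using Suc by (simp add: *)
qed

lemma op_apply_eval:
  assumes "op_regular_at D z"
  shows "\<not> rat_pole (op_apply D u) z \<and> rat_eval (op_apply D u) z = op_eval D (poly u) z"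
proof -
  have reg: "\<not> rat_pole (coeff D k) z" for k using assms unfolding op_regular_at_def by auto
  have each: "\<not> rat_pole (coeff D k * to_fract ((pderiv ^^ k) u)) z \<and>
     rat_eval (coeff D k * to_fract ((pderiv ^^ k) u)) z = rat_eval (coeff D k) z * poly ((pderiv ^^ k) u) z" for k
    using rat_eval_mult[OF reg rat_eval_to_fract[THEN conjunct1]] rat_eval_to_fract by simp
  show ?thesis
    using rat_eval_sum[of "{..degree D}" "\<lambda>k. coeff D k * to_fract ((pderiv ^^ k) u)" z] each
    unfolding op_apply_def op_eval_def deriv_poly_iter by simp
qed

lemma finite_nonreg: "finite {z. \<not> op_regular_at D z}"
proof -
  have "{z. \<not> op_regular_at D z} \<subseteq> (\<Union>k\<le>degree D. {z. poly (snd (quot_of_fract (coeff D k))) z = 0})"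
  proof
    fix z assume "z \<in> {z. \<not> op_regular_at D z}"
    then obtain k where k: "rat_pole (coeff D k) z" unfolding op_regular_at_def by auto
    have "k \<le> degree D"
    proof (rule ccontr)
      assume "\<not> k \<le> degree D"
      hence "coeff D k = 0" by (simp add: coeff_eq_0)
      thus False using k unfolding rat_pole_def by simp
    qed
    thus "z \<in> (\<Union>k\<le>degree D. {z. poly (snd (quot_of_fract (coeff D k))) z = 0})"
      using k unfolding rat_pole_def by auto
  qed
  moreover have "finite (\<Union>k\<le>degree D. {z. poly (snd (quot_of_fract (coeff D k))) z = 0})"
    by (intro finite_UN_I finite_atMost poly_roots_finite snd_quot_of_fract_nonzero)
  ultimately show ?thesis by (rule finite_subset)
qed

lemma op_eval_ext:
  assumes "degree D \<le> N"
  shows "op_eval D f z = (\<Sum>k\<le>N. rat_eval (coeff D k) z * (deriv ^^ k) f z)"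
  unfolding op_eval_def
proof (rule sum.mono_neutral_left)
  show "\<forall>i\<in>{..N} - {..degree D}. rat_eval (coeff D i) z * (deriv ^^ i) f z = 0"
    using rat_eval_0 by (auto simp: coeff_eq_0)
qed (use assms in auto)



lemma entire_poly[simp]: "entire (poly p)"
  unfolding entire_def by (simp add: holomorphic_intros)

lemma entire_exp_poly: "entire (\<lambda>z. exp (poly p z))"
  unfolding entire_def by (intro holomorphic_intros)

lemma entire_cont: "entire f \<Longrightarrow> continuous_on S f"
  unfolding entire_def by (meson holomorphic_on_imp_continuous_on holomorphic_on_subset subset_UNIV)

lemma compact_bound:
  fixes f :: "complex \<Rightarrow> 'b::real_normed_vector"
  assumes "compact K" "continuous_on K f"
  shows "\<exists>M>0. \<forall>z\<in>K. norm (f z) \<le> M"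
proof -
  have "bounded (f ` K)" using compact_continuous_image[OF assms(2,1)] compact_imp_bounded by blast
  thus ?thesis unfolding bounded_pos by auto
qed

lemma compact_in_cball:
  assumes "compact (K::complex set)"
  shows "\<exists>R\<ge>1. K \<subseteq> cball a R"
proof -
  obtain e where "\<forall>y\<in>K. dist a y \<le> e" using compact_imp_bounded[OF assms] bounded_any_center by blast
  thus ?thesis by (intro exI[of _ "max e 1"]) auto
qed

lemma max_mod:
  fixes h :: "complex \<Rightarrow> complex"
  assumes "entire h" "R > 0" "\<forall>z. dist a z = R \<longrightarrow> norm (h z) \<le> B" "z \<in> cball a R"
  shows "norm (h z) \<le> B"
proof (rule maximum_modulus_frontier[of h "cball a R"])
  show "h holomorphic_on interior (cball a R)" using assms(1) unfolding entire_def
    by (meson holomorphic_on_subset subset_UNIV)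
  show "continuous_on (closure (cball a R)) h" using entire_cont[OF assms(1)] .
  show "bounded (cball a R)" by simp
  show "\<And>z. z \<in> frontier (cball a R) \<Longrightarrow> cmod (h z) \<le> B" using assms(2,3) by (simp add: frontier_cball)
qed (use assms in auto)

lemma div_lemma:
  fixes Q :: "complex poly"
  assumes "Q \<noteq> 0" "entire F" "\<forall>v\<in>A. entire v"
   "\<forall>K e. compact K \<longrightarrow> e > 0 \<longrightarrow> (\<exists>v\<in>A. \<forall>z\<in>K. norm (F z - poly Q z * v z) < e)"
  shows "\<exists>g. entire g \<and> (\<forall>z. F z = poly Q z * g z) \<and>
     (\<forall>K e. compact K \<longrightarrow> e > 0 \<longrightarrow> (\<exists>v\<in>A. \<forall>z\<in>K. norm (g z - v z) < e))"
  using assms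
proof (induction "degree Q" arbitrary: Q F rule: less_induct)
  case less
  show ?case
  proof (cases "degree Q = 0")
    case True
    then obtain c where Qc: "Q = [:c:]" by (metis degree_eq_zeroE)
    have c0: "c \<noteq> 0" using less.prems(1) Qc by simp
    show ?thesis
    proof (intro exI[of _ "\<lambda>z. F z / c"] conjI allI impI)
      show "entire (\<lambda>z. F z / c)" using less.prems(2) unfolding entire_def by (intro holomorphic_intros) auto
      show "F z = poly Q z * (F z / c)" for z using Qc c0 by simp
      fix K :: "complex set" and e :: real assume K: "compact K" and e: "e > 0"
      obtain v where v: "v \<in> A" "\<forall>z\<in>K. norm (F z - poly Q z * v z) < e * norm c"
        using less.prems(4) K e c0 by (metis mult_pos_pos zero_less_norm_iff)
      have "norm (F z / c - v z) < e" if "z \<in> K" for z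
      proof -
        have "F z / c - v z = (F z - c * v z) / c" using c0 by (simp add: field_simps)
        hence "norm (F z / c - v z) = norm (F z - c * v z) / norm c" by (simp add: norm_divide)
        also have "\<dots> < e" using v(2) that Qc c0 by (simp add: divide_less_eq mult.commute)
        finally show ?thesis .
      qed
      thus "\<exists>v\<in>A. \<forall>z\<in>K. norm (F z / c - v z) < e" using v(1) by blast
    qed
  next
    case False
    then obtain a where a: "poly Q a = 0" using alg_closed_imp_poly_has_root by blast
    then obtain Q' where Q: "Q = [:-a,1:] * Q'" using poly_eq_0_iff_dvd by (metis dvdE)
    have Q0: "Q' \<noteq> 0" using less.prems(1) Q by auto
    have "degree ([:-a,1:] * Q') = degree [:-a,1:] + degree Q'" using Q0 by (intro degree_mult_eq) auto
    hence deg: "degree Q' < degree Q" using Q by simp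
    have Fa: "F a = 0"
    proof -
      have "norm (F a) < e" if "e > 0" for e
        using less.prems(4)[rule_format, of "{a}" e] that a by auto
      thus ?thesis by (metis less_irrefl norm_ge_zero norm_le_zero_iff not_less)
    qed
    define F1 where "F1 = (\<lambda>z. if z = a then deriv F a else (F z - F a) / (z - a))"
    have eF1: "entire F1" using pole_lemma_open[of F UNIV a] less.prems(2) unfolding entire_def F1_def by simp
    have FF1: "F z = (z - a) * F1 z" for z using Fa unfolding F1_def by auto
    have hyp: "\<forall>K e. compact K \<longrightarrow> e > 0 \<longrightarrow> (\<exists>v\<in>A. \<forall>z\<in>K. norm (F1 z - poly Q' z * v z) < e)"
    proof (intro allI impI)
      fix K :: "complex set" and e :: real assume K: "compact K" and e: "e > 0"
      obtain R where R: "R \<ge> 1" "K \<subseteq> cball a R" using compact_in_cball[OF K] by blast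
      obtain v where v: "v \<in> A" "\<forall>z\<in>cball a R. norm (F z - poly Q z * v z) < e / 2"
        using less.prems(4)[rule_format, of "cball a R" "e/2"] e by auto
      have eH: "entire (\<lambda>z. F1 z - poly Q' z * v z)"
        using eF1 less.prems(3) v(1) unfolding entire_def by (intro holomorphic_intros) auto
      have sph: "\<forall>z. dist a z = R \<longrightarrow> norm (F1 z - poly Q' z * v z) \<le> e / 2"
      proof (intro allI impI)
        fix z assume dz: "dist a z = R"
        have pQ: "poly Q z = (z - a) * poly Q' z" by (simp only: Q poly_mult) (simp add: algebra_simps)
        have "F z - poly Q z * v z = (z - a) * (F1 z - poly Q' z * v z)"
          by (subst FF1[of z], subst pQ) (simp add: algebra_simps)
        hence "norm (F z - poly Q z * v z) = R * norm (F1 z - poly Q' z * v z)"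
          using dz by (simp add: norm_mult dist_norm norm_minus_commute)
        moreover have "norm (F z - poly Q z * v z) < e / 2" using v(2) dz by simp
        ultimately have "R * norm (F1 z - poly Q' z * v z) < e / 2" by simp
        moreover have "norm (F1 z - poly Q' z * v z) \<le> R * norm (F1 z - poly Q' z * v z)"
          using R(1) by (simp add: mult_le_cancel_right1)
        ultimately show "norm (F1 z - poly Q' z * v z) \<le> e / 2" by simp
      qed
      have "\<forall>z\<in>K. norm (F1 z - poly Q' z * v z) < e"
      proof
        fix z assume "z \<in> K"
        hence "z \<in> cball a R" using R by auto
        hence "norm (F1 z - poly Q' z * v z) \<le> e / 2" using max_mod[OF eH _ sph] R(1) by simp
        thus "norm (F1 z - poly Q' z * v z) < e" using e by simp
      qed
      thus "\<exists>v\<in>A. \<forall>z\<in>K. norm (F1 z - poly Q' z * v z) < e" using v(1) by blast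
    qed
    obtain g where g: "entire g" "\<forall>z. F1 z = poly Q' z * g z"
      "\<forall>K e. compact K \<longrightarrow> e > 0 \<longrightarrow> (\<exists>v\<in>A. \<forall>z\<in>K. norm (g z - v z) < e)"
      using less.hyps[OF deg Q0 eF1 less.prems(3) hyp] by blast
    have "\<forall>z. F z = poly Q z * g z"
    proof
      fix z
      have pQ: "poly Q z = (z - a) * poly Q' z" by (simp only: Q poly_mult) (simp add: algebra_simps)
      show "F z = poly Q z * g z" using FF1[of z] g(2) pQ by simp
    qed
    thus ?thesis using g by blast
  qed
qed

lemma deriv_est:
  assumes "entire F" "entire G" "\<forall>w\<in>cball z 1. norm (F w - G w) < d"
  shows "norm ((deriv ^^ k) F z - (deriv ^^ k) G z) \<le> fact k * d"
proof (cases "k = 0")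
  case True
  thus ?thesis using assms(3) by (simp add: less_imp_le)
next
  case False
  have hF: "F holomorphic_on UNIV" "G holomorphic_on UNIV" using assms unfolding entire_def by auto
  have eq: "(deriv ^^ k) (\<lambda>w. F w - G w) z = (deriv ^^ k) F z - (deriv ^^ k) G z"
    using higher_deriv_diff[OF hF] by simp
  have "norm ((deriv ^^ k) (\<lambda>w. F w - G w) z) \<le> fact k * d / 1 ^ k"
  proof (rule Cauchy_higher_deriv_bound[where y = 0])
    show "(\<lambda>w. F w - G w) holomorphic_on ball z 1" using hF
      by (intro holomorphic_intros) (auto intro: holomorphic_on_subset)
    show "continuous_on (cball z 1) (\<lambda>w. F w - G w)"
      using entire_cont[OF assms(1)] entire_cont[OF assms(2)] by (intro continuous_intros)
    show "F w - G w \<in> ball 0 d" if "w \<in> ball z 1" for w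
    proof -
      have "w \<in> cball z 1" using that by auto
      thus ?thesis using assms(3) by (simp add: dist_0_norm)
    qed
  qed (use False in auto)
  thus ?thesis using eq by simp
qed

lemma poly_approx:
  assumes "entire F" "compact K" "e > 0"
  shows "\<exists>t. \<forall>z\<in>K. norm (F z - poly t z) < e"
proof -
  obtain R where R: "R \<ge> 1" "K \<subseteq> cball 0 R" using compact_in_cball[OF assms(2)] by blast
  define r where "r = 2 * R"
  have r0: "r > 0" using R by (simp add: r_def)
  obtain M where M: "M > 0" "\<forall>z\<in>cball 0 r. norm (F z) \<le> M"
    using compact_bound[of "cball 0 r" F] entire_cont[OF assms(1)] by auto
  define M' where "M' = M + 1"
  have hF: "F holomorphic_on UNIV" using assms(1) unfolding entire_def .
  define a where "a = (\<lambda>n. (deriv ^^ n) F 0 / fact n)"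
  have abound: "norm (a n) \<le> M' / r ^ n" for n
  proof (cases "n = 0")
    case True
    have "norm (F 0) \<le> M" using M(2) r0 by auto
    thus ?thesis using True by (auto simp: a_def M'_def)
  next
    case False
    have "norm ((deriv ^^ n) F 0) \<le> fact n * M' / r ^ n"
    proof (rule Cauchy_higher_deriv_bound[where y = 0])
      show "F holomorphic_on ball 0 r" using hF by (auto intro: holomorphic_on_subset)
      show "continuous_on (cball 0 r) F" using entire_cont[OF assms(1)] .
      show "F w \<in> ball 0 M'" if "w \<in> ball 0 r" for w
      proof -
        have "norm (F w) \<le> M" using M(2) that by auto
        thus ?thesis by (simp add: M'_def dist_0_norm)
      qed
    qed (use False r0 in auto)
    hence "norm ((deriv ^^ n) F 0) / fact n \<le> (fact n * M' / r ^ n) / fact n"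
      by (rule divide_right_mono) simp
    thus ?thesis by (simp add: a_def norm_divide)
  qed
  obtain N where N: "(1/2::real) ^ N < e / (2 * M')"
    using real_arch_pow_inv[of "e / (2 * M')" "1/2"] assms(3) M by (auto simp: M'_def)
  define t where "t = (\<Sum>n<N. monom (a n) n)"
  have pt: "poly t w = (\<Sum>n<N. a n * w ^ n)" for w by (simp add: t_def poly_sum poly_monom)
  have "norm (F w - poly t w) < e" if w: "w \<in> K" for w
  proof -
    have wR: "norm w \<le> R" using w R by auto
    have s: "(\<lambda>n. a n * w ^ n) sums F w"
      using holomorphic_power_series[of F 0 r w] hF wR R unfolding a_def r_def
      by (auto intro: holomorphic_on_subset)
    have fb: "norm (a n * w ^ n) \<le> M' * (1/2) ^ n" for n
    proof -
      have "norm (a n * w ^ n) \<le> M' / r ^ n * R ^ n"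
        unfolding norm_mult norm_power
        by (intro mult_mono abound power_mono wR) (use r0 M in \<open>auto simp: M'_def\<close>)
      also have "\<dots> = M' * (1/2) ^ n" using R by (simp add: r_def power_mult_distrib field_simps)
      finally show ?thesis .
    qed
    define f where "f = (\<lambda>n. a n * w ^ n)"
    have tail: "(\<lambda>i. f (i + N)) sums (F w - (\<Sum>i<N. f i))"
      using s sums_iff_shift[of f N "F w - (\<Sum>i<N. f i)"] unfolding f_def by simp
    have sg: "summable (\<lambda>i. M' * (1/2) ^ (i + N))"
      by (intro summable_mult) (simp add: power_add summable_mult2)
    have sn: "summable (\<lambda>i. norm (f (i + N)))"
      by (rule summable_comparison_test'[OF sg]) (use fb in \<open>simp add: f_def\<close>)
    have "norm (F w - (\<Sum>i<N. f i)) = norm (\<Sum>i. f (i + N))" using tail sums_unique by metis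
    also have "\<dots> \<le> (\<Sum>i. norm (f (i + N)))" by (rule summable_norm[OF sn])
    also have "\<dots> \<le> (\<Sum>i. M' * (1/2) ^ (i + N))"
      by (rule suminf_le[OF _ sn sg]) (use fb in \<open>simp add: f_def\<close>)
    also have "\<dots> = M' * (1/2) ^ N * 2"
    proof -
      have "(\<lambda>i. M' * (1/2) ^ (i + N)) = (\<lambda>i. (M' * (1/2) ^ N) * (1/2) ^ i)"
        by (simp add: power_add mult_ac)
      moreover have "(\<lambda>i. (M' * (1/2::real) ^ N) * (1/2) ^ i) sums ((M' * (1/2) ^ N) * 2)"
        using sums_mult[OF geometric_sums[of "1/2::real"]] by simp
      ultimately show ?thesis using sums_unique by metis
    qed
    also have "\<dots> < e" using N M by (simp add: M'_def field_simps)
    finally show ?thesis using pt unfolding f_def by simp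
  qed
  thus ?thesis by blast
qed



lemma H_closure_iff: "f \<in> H_closure V \<longleftrightarrow> entire f \<and>
     (\<forall>K. compact K \<longrightarrow> (\<forall>e>0. \<exists>v\<in>V. \<forall>z\<in>K. norm (f z - poly v z) < e))"
  unfolding H_closure_def by simp

lemma entire_L:
  assumes "entire F"
  shows "entire (\<lambda>z. \<Sum>k\<le>N. poly (c k) z * (deriv ^^ k) F z)"
  using assms unfolding entire_def by (intro holomorphic_intros holomorphic_higher_deriv) auto

lemma dext:
  assumes D: "D \<in> Dops U V" and f: "f \<in> H_closure U"
  shows "\<exists>g\<in>H_closure V. \<forall>z. op_regular_at D z \<longrightarrow> g z = op_eval D f z"
proof -
  define N where "N = degree D"
  define qd where "qd = (\<lambda>k. snd (quot_of_fract (coeff D k)))"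
  define qn where "qn = (\<lambda>k. fst (quot_of_fract (coeff D k)))"
  define Q where "Q = (\<Prod>k\<le>N. qd k)"
  define c where "c = (\<lambda>k. qn k * (Q div qd k))"
  define L where "L = (\<lambda>F z. \<Sum>k\<le>N. poly (c k) z * (deriv ^^ k) F z)"
  have qd0: "qd k \<noteq> 0" for k unfolding qd_def by simp
  have Q0: "Q \<noteq> 0" unfolding Q_def using qd0 by simp
  have Qfac: "Q = qd k * (Q div qd k)" if "k \<le> N" for k
  proof -
    have "qd k dvd Q" unfolding Q_def using that by (intro dvd_prodI) auto
    thus ?thesis by simp
  qed
  have regQ: "poly Q z \<noteq> 0" if "op_regular_at D z" for z
  proof -
    have "poly (qd k) z \<noteq> 0" for k using that unfolding op_regular_at_def rat_pole_def qd_def by auto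
    thus ?thesis unfolding Q_def by (simp add: poly_prod)
  qed
  have regc: "poly Q z * rat_eval (coeff D k) z = poly (c k) z" if "op_regular_at D z" "k \<le> N" for z k
  proof -
    have nz: "poly (qd k) z \<noteq> 0" using that unfolding op_regular_at_def rat_pole_def qd_def by auto
    have "poly Q z = poly (qd k) z * poly (Q div qd k) z" using Qfac[OF that(2)] by (metis poly_mult)
    thus ?thesis using nz unfolding c_def rat_eval_def qd_def qn_def by simp
  qed
  have Lreg: "L F z = poly Q z * op_eval D F z" if "op_regular_at D z" for F z
    unfolding L_def op_eval_def N_def[symmetric] sum_distrib_left
    by (rule sum.cong) (use regc[OF that] in \<open>auto simp: mult.assoc[symmetric]\<close>)
  have eL: "entire (L F)" if "entire F" for F unfolding L_def using entire_L[OF that] .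
  have fin: "finite {z. \<not> op_regular_at D z}" by (rule finite_nonreg)
  have claim4: "\<exists>v\<in>V. \<forall>z. L (poly u) z = poly Q z * poly v z" if uU: "u \<in> U" for u
  proof -
    obtain v where v: "v \<in> V" "op_apply D u = to_fract v" using D uU unfolding Dops_def by auto
    have "\<forall>z. z \<notin> {z. \<not> op_regular_at D z} \<longrightarrow> L (poly u) z = poly Q z * poly v z"
    proof (intro allI impI)
      fix z assume "z \<notin> {z. \<not> op_regular_at D z}"
      hence r: "op_regular_at D z" by simp
      have "op_eval D (poly u) z = poly v z"
        using op_apply_eval[OF r, of u] v(2) rat_eval_to_fract by metis
      thus "L (poly u) z = poly Q z * poly v z" using Lreg[OF r] by simp
    qed
    moreover have c1: "continuous_on UNIV (L (poly u))" using eL[of "poly u"] entire_cont by simp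
    moreover have c2: "continuous_on UNIV (\<lambda>z. poly Q z * poly v z)" by (intro continuous_intros)
    ultimately have "\<forall>z. L (poly u) z = poly Q z * poly v z"
      using cont_eq_cofinite[OF c1 c2 fin] by blast
    thus ?thesis using v(1) by blast
  qed
  have ef: "entire f" using f H_closure_iff by blast
  have claim3: "\<exists>u\<in>U. \<forall>z\<in>K. norm (L f z - L (poly u) z) < e" if K: "compact K" and e: "e > 0" for K e
  proof -
    have cc: "continuous_on K (\<lambda>z. \<Sum>k\<le>N. norm (poly (c k) z) * fact k)"
      by (intro continuous_intros)
    obtain B where B: "B > 0" "\<forall>z\<in>K. norm (\<Sum>k\<le>N. norm (poly (c k) z) * fact k) \<le> B"
      using compact_bound[OF K cc] by blast
    obtain R where R: "R \<ge> 1" "K \<subseteq> cball 0 R" using compact_in_cball[OF K] by blast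
    obtain u where u: "u \<in> U" "\<forall>w\<in>cball 0 (R+1). norm (f w - poly u w) < e / (2 * B)"
      using f unfolding H_closure_iff using e B(1)
      by (metis compact_cball divide_pos_pos mult_pos_pos zero_less_numeral)
    have "norm (L f z - L (poly u) z) < e" if z: "z \<in> K" for z
    proof -
      have cb: "\<forall>w\<in>cball z 1. norm (f w - poly u w) < e / (2 * B)"
      proof
        fix w assume "w \<in> cball z 1"
        hence "dist z w \<le> 1" by simp
        moreover have "dist 0 z \<le> R" using z R by auto
        moreover have "dist 0 w \<le> dist 0 z + dist z w" by (rule dist_triangle)
        ultimately have "w \<in> cball 0 (R+1)" by simp
        thus "norm (f w - poly u w) < e / (2 * B)" using u(2) by blast
      qed
      have dk: "norm ((deriv ^^ k) f z - (deriv ^^ k) (poly u) z) \<le> fact k * (e / (2 * B))" for k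
        by (rule deriv_est[OF ef entire_poly cb])
      have "L f z - L (poly u) z = (\<Sum>k\<le>N. poly (c k) z * ((deriv ^^ k) f z - (deriv ^^ k) (poly u) z))"
        unfolding L_def by (simp add: sum_subtractf algebra_simps)
      hence "norm (L f z - L (poly u) z) \<le> (\<Sum>k\<le>N. norm (poly (c k) z * ((deriv ^^ k) f z - (deriv ^^ k) (poly u) z)))"
        by (simp add: norm_sum)
      also have "\<dots> \<le> (\<Sum>k\<le>N. norm (poly (c k) z) * (fact k * (e / (2 * B))))"
        unfolding norm_mult by (rule sum_mono, rule mult_left_mono[OF dk]) simp
      also have "\<dots> = (\<Sum>k\<le>N. norm (poly (c k) z) * fact k) * (e / (2 * B))"
        by (simp only: sum_distrib_right mult.assoc)
      also have "\<dots> \<le> B * (e / (2 * B))"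
        using B(2) z e B(1) by (intro mult_right_mono) auto
      also have "\<dots> < e" using B(1) e by simp
      finally show ?thesis .
    qed
    thus ?thesis using u(1) by blast
  qed
  have hyp: "\<forall>K e. compact K \<longrightarrow> e > 0 \<longrightarrow> (\<exists>v\<in>poly ` V. \<forall>z\<in>K. norm (L f z - poly Q z * v z) < e)"
  proof (intro allI impI)
    fix K :: "complex set" and e :: real assume K: "compact K" and e: "e > 0"
    obtain u where u: "u \<in> U" "\<forall>z\<in>K. norm (L f z - L (poly u) z) < e" using claim3[OF K e] by blast
    obtain v where v: "v \<in> V" "\<forall>z. L (poly u) z = poly Q z * poly v z" using claim4[OF u(1)] by blast
    show "\<exists>v\<in>poly ` V. \<forall>z\<in>K. norm (L f z - poly Q z * v z) < e"
      using u(2) v by (intro bexI[of _ "poly v"]) auto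
  qed
  have Ae: "\<forall>v\<in>poly ` V. entire v" by auto
  obtain g where g: "entire g" "\<forall>z. L f z = poly Q z * g z"
     "\<forall>K e. compact K \<longrightarrow> e > 0 \<longrightarrow> (\<exists>v\<in>poly ` V. \<forall>z\<in>K. norm (g z - v z) < e)"
    using div_lemma[OF Q0 eL[OF ef] Ae hyp] by blast
  have "g \<in> H_closure V" unfolding H_closure_iff using g(1,3) by fast
  moreover have "\<forall>z. op_regular_at D z \<longrightarrow> g z = op_eval D f z"
  proof (intro allI impI)
    fix z assume r: "op_regular_at D z"
    have "poly Q z * g z = poly Q z * op_eval D f z" using g(2) Lreg[OF r] by metis
    thus "g z = op_eval D f z" using regQ[OF r] by simp
  qed
  ultimately show ?thesis by blast
qed



definition pclosed :: "complex poly set \<Rightarrow> bool" where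
  "pclosed W \<longleftrightarrow> (\<forall>w. (\<forall>K. compact K \<longrightarrow> (\<forall>e>0. \<exists>v\<in>W. \<forall>z\<in>K. norm (poly w z - poly v z) < e)) \<longrightarrow> w \<in> W)"

definition subsp :: "complex poly set \<Rightarrow> bool" where
  "subsp W \<longleftrightarrow> 0 \<in> W \<and> (\<forall>u\<in>W. \<forall>v\<in>W. u + v \<in> W) \<and> (\<forall>c. \<forall>v\<in>W. smult c v \<in> W)"

lemma pclosedD:
  assumes "pclosed W" "\<And>K e. compact K \<Longrightarrow> e > 0 \<Longrightarrow> \<exists>v\<in>W. \<forall>z\<in>K. norm (poly w z - poly v z) < e"
  shows "w \<in> W"
  using assms unfolding pclosed_def by blast

lemma subsp_diff: "subsp W \<Longrightarrow> u \<in> W \<Longrightarrow> v \<in> W \<Longrightarrow> u - v \<in> W"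
proof -
  assume s: "subsp W" "u \<in> W" "v \<in> W"
  have "smult (-1) v \<in> W" using s unfolding subsp_def by blast
  hence "u + smult (-1) v \<in> W" using s unfolding subsp_def by blast
  thus ?thesis by simp
qed

lemma addv_closed:
  assumes sW: "subsp W" and cW: "pclosed W" and xW: "x \<notin> W"
  shows "pclosed {w + smult c x | w c. w \<in> W}"
  unfolding pclosed_def
proof (intro allI impI)
  fix y
  assume "\<forall>K. compact K \<longrightarrow> (\<forall>e>0. \<exists>v\<in>{w + smult c x | w c. w \<in> W}. \<forall>z\<in>K. norm (poly y z - poly v z) < e)"
  hence ap: "\<And>K e. compact K \<Longrightarrow> e > 0 \<Longrightarrow> \<exists>w\<in>W. \<exists>c. \<forall>z\<in>K. norm (poly y z - poly w z - c * poly x z) < e"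
    by (fastforce simp: algebra_simps)
  define Q where "Q = (\<lambda>B K e. \<exists>w\<in>W. \<exists>c. norm c \<le> B \<and> (\<forall>z\<in>K. norm (poly y z - poly w z - c * poly x z) < e))"
  show "y \<in> {w + smult c x | w c. w \<in> W}"
  proof (cases "\<exists>B. \<forall>K e. compact K \<longrightarrow> e > 0 \<longrightarrow> Q B K e")
    case True
    then obtain B where B0: "\<And>K e. compact K \<Longrightarrow> e > 0 \<Longrightarrow> Q B K e"
      by blast
    have B: "\<And>K e. compact K \<Longrightarrow> e > 0 \<Longrightarrow> \<exists>w\<in>W. \<exists>c. norm c \<le> B \<and> (\<forall>z\<in>K. norm (poly y z - poly w z - c * poly x z) < e)"
      using B0 unfolding Q_def by blast
    have "\<forall>n. \<exists>p. fst p \<in> W \<and> norm (snd p) \<le> B \<and> (\<forall>z\<in>cball 0 (real n). norm (poly y z - poly (fst p) z - snd p * poly x z) < 1 / (real n + 1))"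
    proof
      fix n :: nat
      obtain w c where "w \<in> W" "norm c \<le> B" "\<forall>z\<in>cball 0 (real n). norm (poly y z - poly w z - c * poly x z) < 1 / (real n + 1)"
        using B[of "cball 0 (real n)" "1 / (real n + 1)"] by auto
      thus "\<exists>p. fst p \<in> W \<and> norm (snd p) \<le> B \<and> (\<forall>z\<in>cball 0 (real n). norm (poly y z - poly (fst p) z - snd p * poly x z) < 1 / (real n + 1))"
        by (intro exI[of _ "(w, c)"]) auto
    qed
    then obtain p where p: "\<And>n. fst (p n) \<in> W" "\<And>n. norm (snd (p n)) \<le> B"
      "\<And>n. \<forall>z\<in>cball 0 (real n). norm (poly y z - poly (fst (p n)) z - snd (p n) * poly x z) < 1 / (real n + 1)"
      by metis
    define cs where "cs = (\<lambda>n. snd (p n))"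
    have "\<forall>n. cs n \<in> cball 0 B" using p(2) by (simp add: cs_def)
    then obtain l r where lr: "strict_mono r" "(cs \<circ> r) \<longlonglongrightarrow> l"
      using compact_imp_seq_compact[OF compact_cball[of 0 B]] unfolding seq_compact_def by metis
    have "y - smult l x \<in> W"
    proof (rule pclosedD[OF cW])
        fix K :: "complex set" and e :: real assume K: "compact K" and e: "e > 0"
        obtain R where R: "R \<ge> 1" "K \<subseteq> cball 0 R" using compact_in_cball[OF K] by blast
        obtain X where X: "X > 0" "\<forall>z\<in>K. norm (poly x z) \<le> X"
          using compact_bound[OF K entire_cont[OF entire_poly, of K x]] by blast
        obtain N1 where N1: "\<forall>n\<ge>N1. dist ((cs \<circ> r) n) l < e / (2 * X)"
          using lr(2) unfolding lim_sequentially using e X by (metis divide_pos_pos mult_pos_pos zero_less_numeral)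
        define N2 where "N2 = nat \<lceil>max R (2 / e)\<rceil>"
        have N2R: "R \<le> real N2" unfolding N2_def by linarith
        have N2e: "2 / e \<le> real N2" unfolding N2_def by linarith
        define n where "n = max N1 N2"
        have rn: "n \<le> r n" using seq_suble[OF lr(1)] by simp
        have Kn: "K \<subseteq> cball 0 (real (r n))" using R N2R rn unfolding n_def by (auto simp: subset_iff) 
        have small: "1 / (real (r n) + 1) < e / 2"
        proof -
          have "N2 \<le> r n" using rn unfolding n_def by simp
          hence "real N2 \<le> real (r n)" by simp
          hence "2 / e < real (r n) + 1" using N2e by linarith
          hence "2 < (real (r n) + 1) * e" using e by (simp add: divide_less_eq)
          hence "1 < e / 2 * (real (r n) + 1)" by (simp add: mult.commute)
          moreover have "0 < real (r n) + 1" by simp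
          ultimately show ?thesis by (simp add: divide_less_eq)
        qed
        have dc: "norm (cs (r n) - l) < e / (2 * X)" using N1 unfolding n_def by (simp add: dist_norm)
        have "\<forall>z\<in>K. norm (poly (y - smult l x) z - poly (fst (p (r n))) z) < e"
        proof
          fix z assume z: "z \<in> K"
          have "z \<in> cball 0 (real (r n))" using Kn z by blast
          from bspec[OF p(3)[of "r n"] this]
          have "norm (poly y z - poly (fst (p (r n))) z - cs (r n) * poly x z) < 1 / (real (r n) + 1)"
            unfolding cs_def .
          hence a1: "norm (poly y z - poly (fst (p (r n))) z - cs (r n) * poly x z) < e / 2"
            using small by linarith
          have "norm ((cs (r n) - l) * poly x z) \<le> e / (2 * X) * X"
            unfolding norm_mult using dc X z e by (intro mult_mono) auto
          also have "\<dots> = e / 2" using X by simp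
          finally have a2: "norm ((cs (r n) - l) * poly x z) \<le> e / 2" .
          have eqn: "poly (y - smult l x) z - poly (fst (p (r n))) z =
              (poly y z - poly (fst (p (r n))) z - cs (r n) * poly x z) + (cs (r n) - l) * poly x z"
            by (simp add: algebra_simps)
          have "norm (poly (y - smult l x) z - poly (fst (p (r n))) z) \<le>
              norm (poly y z - poly (fst (p (r n))) z - cs (r n) * poly x z) + norm ((cs (r n) - l) * poly x z)"
            unfolding eqn by (rule norm_triangle_ineq)
          thus "norm (poly (y - smult l x) z - poly (fst (p (r n))) z) < e" using a1 a2 by simp
        qed
        thus "\<exists>v\<in>W. \<forall>z\<in>K. norm (poly (y - smult l x) z - poly v z) < e" using p(1) by blast
    qed
    moreover have "y = (y - smult l x) + smult l x" by simp
    ultimately show ?thesis by blast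
  next
    case False
    have nb: "\<exists>K e. compact K \<and> e > 0 \<and> \<not> Q B K e" for B
    proof -
      have "\<not> (\<forall>K e. compact K \<longrightarrow> e > 0 \<longrightarrow> Q B K e)" using False by blast
      thus ?thesis by blast
    qed
    have "x \<in> W"
    proof (rule pclosedD[OF cW])
        fix K' :: "complex set" and e' :: real assume K': "compact K'" and e': "e' > 0"
        obtain Y where Y: "Y > 0" "\<forall>z\<in>K'. norm (poly y z) \<le> Y"
          using compact_bound[OF K' entire_cont[OF entire_poly, of K' y]] by blast
        obtain K e where Ke0: "compact K" "e > 0" "\<not> Q ((Y + 1) / e') K e"
          using nb[of "(Y + 1) / e'"] by blast
        have Ke: "compact K" "e > 0"
          "\<not> (\<exists>w\<in>W. \<exists>c. norm c \<le> (Y + 1) / e' \<and> (\<forall>z\<in>K. norm (poly y z - poly w z - c * poly x z) < e))"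
          using Ke0 unfolding Q_def by auto
        have cU: "compact (K \<union> K')" using Ke(1) K' by (rule compact_Un)
        have me: "min e 1 > 0" using Ke(2) by simp
        obtain w c where wc: "w \<in> W" "\<forall>z\<in>K \<union> K'. norm (poly y z - poly w z - c * poly x z) < min e 1"
          using ap[OF cU me] by blast
        have cB: "norm c > (Y + 1) / e'"
        proof (rule ccontr)
          assume "\<not> norm c > (Y + 1) / e'"
          hence "norm c \<le> (Y + 1) / e'" by simp
          moreover have "\<forall>z\<in>K. norm (poly y z - poly w z - c * poly x z) < e"
          proof
            fix z assume "z \<in> K"
            hence "z \<in> K \<union> K'" by simp
            from bspec[OF wc(2) this] show "norm (poly y z - poly w z - c * poly x z) < e" by simp
          qed
          ultimately show False using Ke(3) wc(1) by blast
        qed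
        have "(Y + 1) / e' > 0" using Y e' by simp
        hence cpos: "norm c > 0" using cB by linarith
        hence c0: "c \<noteq> 0" by (metis norm_zero order_less_irrefl)
        have "\<forall>z\<in>K'. norm (poly x z - poly (smult (- 1 / c) w) z) < e'"
        proof
          fix z assume z: "z \<in> K'"
          have e1: "(poly w z + c * poly x z) / c = poly w z / c + poly x z" using c0 by (simp add: add_divide_distrib)
          have "poly x z - poly (smult (- 1 / c) w) z = poly w z / c + poly x z" by simp
          hence "poly x z - poly (smult (- 1 / c) w) z = (poly w z + c * poly x z) / c" using e1 by simp
          hence nq: "norm (poly x z - poly (smult (- 1 / c) w) z) = norm (poly w z + c * poly x z) / norm c"
            by (simp add: norm_divide)
          have eqn: "poly w z + c * poly x z = poly y z - (poly y z - poly w z - c * poly x z)" by simp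
          have "norm (poly w z + c * poly x z) \<le> norm (poly y z) + norm (poly y z - poly w z - c * poly x z)"
            unfolding eqn by (rule norm_triangle_ineq4)
          moreover have "norm (poly y z) \<le> Y" using Y(2) z by blast
          moreover have zz: "z \<in> K \<union> K'" using z by simp
          moreover have "norm (poly y z - poly w z - c * poly x z) < min e 1" using bspec[OF wc(2) zz] .
          moreover have "min e 1 \<le> 1" by simp
          ultimately have "norm (poly w z + c * poly x z) < Y + 1" by linarith
          hence "norm (poly w z + c * poly x z) / norm c < (Y + 1) / norm c" using cpos by (simp add: divide_strict_right_mono)
          also have "\<dots> < e'"
          proof -
            have "(Y + 1) < e' * norm c" using cB e' by (simp add: divide_less_eq mult.commute)
            thus ?thesis using cpos by (simp add: divide_less_eq)
          qed
          finally show "norm (poly x z - poly (smult (- 1 / c) w) z) < e'" using nq by simp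
        qed
        moreover have "smult (- 1 / c) w \<in> W" using sW wc(1) unfolding subsp_def by blast
        ultimately show "\<exists>v\<in>W. \<forall>z\<in>K'. norm (poly x z - poly v z) < e'" by blast
    qed
    thus ?thesis using xW by blast
  qed
qed

lemma rhoC_closed:
  fixes rho :: "complex poly"
  assumes r0: "rho \<noteq> 0" and rW: "\<forall>q. rho * q \<in> W"
  shows "pclosed {w \<in> W. w mod rho = 0}"
  unfolding pclosed_def
proof (intro allI impI)
  fix y assume ap: "\<forall>K. compact K \<longrightarrow> (\<forall>e>0. \<exists>v\<in>{w \<in> W. w mod rho = 0}. \<forall>z\<in>K. norm (poly y z - poly v z) < e)"
  have hyp: "\<forall>K e. compact K \<longrightarrow> e > 0 \<longrightarrow> (\<exists>v\<in>range poly. \<forall>z\<in>K. norm (poly y z - poly rho z * v z) < e)"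
  proof (intro allI impI)
    fix K :: "complex set" and e :: real
    assume Ke: "compact K" "e > 0"
    have "\<exists>v\<in>{w \<in> W. w mod rho = 0}. \<forall>z\<in>K. norm (poly y z - poly v z) < e"
      using ap Ke by blast
    then obtain v where v: "v \<in> {w \<in> W. w mod rho = 0}" "\<forall>z\<in>K. norm (poly y z - poly v z) < e"
      by (rule bexE)
    have vm: "v mod rho = 0" using v(1) by simp
    have vd: "v = rho * (v div rho)" using div_mult_mod_eq[of v rho] vm by (simp add: mult.commute)
    have "poly v z = poly rho z * poly (v div rho) z" for z
      using arg_cong[OF vd, of "\<lambda>p. poly p z"] by (simp only: poly_mult)
    thus "\<exists>v\<in>range poly. \<forall>z\<in>K. norm (poly y z - poly rho z * v z) < e" using v(2) by auto
  qed
  have Ae: "\<forall>v\<in>range poly. entire v" by auto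
  obtain g where g: "entire g" "\<forall>z. poly y z = poly rho z * g z"
    using div_lemma[OF r0 entire_poly Ae hyp] by blast
  have "rho dvd y" using polydiv[OF r0 entire_cont[OF g(1)] g(2)] .
  hence "y mod rho = 0" "y = rho * (y div rho)" by auto
  moreover have "rho * (y div rho) \<in> W" using rW by blast
  ultimately show "y \<in> {w \<in> W. w mod rho = 0}" by simp
qed

lemma filtration:
  fixes rho :: "complex poly"
  assumes r0: "rho \<noteq> 0" and rW: "\<forall>q. rho * q \<in> W" and sW: "subsp W"
  shows "pclosed {w \<in> W. \<forall>i\<ge>d. coeff (w mod rho) i = 0} \<and> subsp {w \<in> W. \<forall>i\<ge>d. coeff (w mod rho) i = 0}"
proof (induction d)
  case 0
  have eq: "{w \<in> W. \<forall>i\<ge>0. coeff (w mod rho) i = 0} = {w \<in> W. w mod rho = 0}"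
    by (auto simp: poly_eq_iff)
  have "subsp {w \<in> W. w mod rho = 0}"
    using sW unfolding subsp_def by (auto simp: poly_mod_add_left mod_smult_left)
  thus ?case using rhoC_closed[OF r0 rW] eq by simp
next
  case (Suc d)
  define S where "S = (\<lambda>d. {w \<in> W. \<forall>i\<ge>d. coeff (w mod rho) i = 0})"
  have IH: "pclosed (S d)" "subsp (S d)" using Suc unfolding S_def by auto
  have sub: "subsp (S (Suc d))"
    using sW unfolding subsp_def S_def by (auto simp: poly_mod_add_left mod_smult_left)
  show ?case
  proof (cases "\<exists>x\<in>S (Suc d). coeff (x mod rho) d \<noteq> 0")
    case True
    then obtain x where x: "x \<in> S (Suc d)" "coeff (x mod rho) d \<noteq> 0" by blast
    have xn: "x \<notin> S d" using x(2) unfolding S_def by auto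
    have eq: "S (Suc d) = {w + smult c x | w c. w \<in> S d}"
    proof
      show "S (Suc d) \<subseteq> {w + smult c x | w c. w \<in> S d}"
      proof
        fix w assume w: "w \<in> S (Suc d)"
        define c where "c = coeff (w mod rho) d / coeff (x mod rho) d"
        have wW: "w \<in> W" "x \<in> W" using w x(1) unfolding S_def by auto
        have "w - smult c x \<in> W" using subsp_diff[OF sW wW(1)] sW wW(2) unfolding subsp_def by blast
        moreover have "\<forall>i\<ge>d. coeff ((w - smult c x) mod rho) i = 0"
        proof (intro allI impI)
          fix i assume "d \<le> i"
          show "coeff ((w - smult c x) mod rho) i = 0"
          proof (cases "i = d")
            case True
            thus ?thesis using x(2) by (simp add: poly_mod_diff_left mod_smult_left c_def)
          next
            case False
            hence "Suc d \<le> i" using \<open>d \<le> i\<close> by simp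
            thus ?thesis using w x(1) unfolding S_def by (simp add: poly_mod_diff_left mod_smult_left)
          qed
        qed
        ultimately have "w - smult c x \<in> S d" unfolding S_def by simp
        moreover have "w = (w - smult c x) + smult c x" by simp
        ultimately show "w \<in> {w + smult c x | w c. w \<in> S d}" by blast
      qed
    next
      show "{w + smult c x | w c. w \<in> S d} \<subseteq> S (Suc d)"
      proof
        fix v assume "v \<in> {w + smult c x | w c. w \<in> S d}"
        then obtain w c where wc: "v = w + smult c x" "w \<in> S d" by blast
        have "S d \<subseteq> S (Suc d)" unfolding S_def by auto
        hence "w \<in> S (Suc d)" using wc(2) by blast
        thus "v \<in> S (Suc d)" using sub x(1) wc(1) unfolding subsp_def by blast
      qed
    qed
    have "pclosed (S (Suc d))" unfolding eq by (rule addv_closed[OF IH(2) IH(1) xn])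
    thus ?thesis using sub unfolding S_def by simp
  next
    case False
    have "S (Suc d) = S d"
    proof
      show "S (Suc d) \<subseteq> S d"
      proof
        fix w assume w: "w \<in> S (Suc d)"
        hence "coeff (w mod rho) d = 0" using False by blast
        moreover have "w \<in> W" "\<forall>i\<ge>Suc d. coeff (w mod rho) i = 0" using w unfolding S_def by auto
        ultimately have "\<forall>i\<ge>d. coeff (w mod rho) i = 0" by (metis Suc_leI le_neq_implies_less)
        thus "w \<in> S d" using \<open>w \<in> W\<close> unfolding S_def by simp
      qed
    qed (auto simp: S_def)
    thus ?thesis using IH sub unfolding S_def by simp
  qed
qed

lemma classS_closed:
  assumes "V \<in> classS"
  shows "pclosed V"
proof -
  obtain rho where r: "rho \<noteq> 0" "\<forall>q. rho * q \<in> V" using assms unfolding classS_def by blast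
  have sV: "subsp V" using assms unfolding classS_def subsp_def by blast
  have eq: "{w \<in> V. \<forall>i\<ge>degree rho. coeff (w mod rho) i = 0} = V"
  proof -
    have "coeff (w mod rho) i = 0" if "i \<ge> degree rho" for w i
      using degree_mod_less[OF r(1), of w] that by (auto intro: coeff_eq_0)
    thus ?thesis by auto
  qed
  show ?thesis using filtration[OF r sV, of "degree rho"] eq by simp
qed



lemma herm:
  fixes rho :: "complex poly"
  assumes "rho \<noteq> 0" "entire F"
  shows "\<exists>r h. entire h \<and> (\<forall>z. F z = poly r z + poly rho z * h z)"
  using assms
proof (induction "degree rho" arbitrary: rho F rule: less_induct)
  case less
  show ?case
  proof (cases "degree rho = 0")
    case True
    then obtain c where Qc: "rho = [:c:]" by (metis degree_eq_zeroE)
    have c0: "c \<noteq> 0" using less.prems(1) Qc by simp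
    have "entire (\<lambda>z. F z / c)" using less.prems(2) unfolding entire_def by (intro holomorphic_intros) auto
    moreover have "\<forall>z. F z = poly 0 z + poly rho z * (F z / c)" using Qc c0 by simp
    ultimately show ?thesis by blast
  next
    case False
    then obtain a where a: "poly rho a = 0" using alg_closed_imp_poly_has_root by blast
    then obtain Q' where Q: "rho = [:-a,1:] * Q'" using poly_eq_0_iff_dvd by (metis dvdE)
    have Q0: "Q' \<noteq> 0" using less.prems(1) Q by auto
    have "degree ([:-a,1:] * Q') = degree [:-a,1:] + degree Q'" using Q0 by (intro degree_mult_eq) auto
    hence deg: "degree Q' < degree rho" using Q by simp
    define F1 where "F1 = (\<lambda>z. if z = a then deriv F a else (F z - F a) / (z - a))"
    have eF1: "entire F1" using pole_lemma_open[of F UNIV a] less.prems(2) unfolding entire_def F1_def by simp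
    have FF1: "F z = F a + (z - a) * F1 z" for z unfolding F1_def by auto
    obtain r' h where rh: "entire h" "\<forall>z. F1 z = poly r' z + poly Q' z * h z"
      using less.hyps[OF deg Q0 eF1] by blast
    have "\<forall>z. F z = poly ([:F a:] + [:-a,1:] * r') z + poly rho z * h z"
    proof
      fix z
      have pQ: "poly rho z = (z - a) * poly Q' z" by (simp only: Q poly_mult) (simp add: algebra_simps)
      have pr: "poly ([:F a:] + [:-a,1:] * r') z = F a + (z - a) * poly r' z" by (simp add: algebra_simps)
      show "F z = poly ([:F a:] + [:-a,1:] * r') z + poly rho z * h z"
        unfolding pQ pr using FF1[of z] rh(2) by (simp add: algebra_simps)
    qed
    thus ?thesis using rh(1) by blast
  qed
qed

lemma classS_props:
  assumes "U \<in> classS"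
  shows "\<exists>rho. rho \<noteq> 0 \<and> (\<forall>q. rho * q \<in> U)" "\<forall>u\<in>U. \<forall>v\<in>U. u + v \<in> U"
  using assms unfolding classS_def by auto

lemma s1:
  assumes add: "\<forall>u\<in>U. \<forall>v\<in>U. u + v \<in> U" and rU: "\<forall>q. rho * q \<in> U" and u: "u \<in> U" and k: "entire k"
  shows "(\<lambda>z. poly u z + poly rho z * k z) \<in> H_closure U"
  unfolding H_closure_iff
proof (intro conjI allI impI)
  show "entire (\<lambda>z. poly u z + poly rho z * k z)" using k unfolding entire_def by (intro holomorphic_intros) auto
  fix K :: "complex set" and e :: real assume K: "compact K" and e: "e > 0"
  obtain M where M: "M > 0" "\<forall>z\<in>K. norm (poly rho z) \<le> M"
    using compact_bound[OF K entire_cont[OF entire_poly, of K rho]] by blast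
  have eM: "e / M > 0" using e M(1) by simp
  obtain t where t: "\<forall>z\<in>K. norm (k z - poly t z) < e / M" using poly_approx[OF k K eM] by blast
  have "u + rho * t \<in> U" using add u rU by blast
  moreover have "\<forall>z\<in>K. norm (poly u z + poly rho z * k z - poly (u + rho * t) z) < e"
  proof
    fix z assume z: "z \<in> K"
    have "poly u z + poly rho z * k z - poly (u + rho * t) z = poly rho z * (k z - poly t z)"
      by (simp add: algebra_simps)
    hence "norm (poly u z + poly rho z * k z - poly (u + rho * t) z) = norm (poly rho z) * norm (k z - poly t z)"
      by (simp add: norm_mult)
    also have "\<dots> \<le> M * norm (k z - poly t z)" using M(2) z by (intro mult_right_mono) auto
    also have "\<dots> < M * (e / M)" using t z M(1) by (intro mult_strict_left_mono) auto
    also have "\<dots> = e" using M(1) by simp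
    finally show "norm (poly u z + poly rho z * k z - poly (u + rho * t) z) < e" .
  qed
  ultimately show "\<exists>v\<in>U. \<forall>z\<in>K. norm (poly u z + poly rho z * k z - poly v z) < e" by blast
qed

lemma exp_cancel1: "exp (a::complex) * exp (- a) = 1"
proof -
  have "exp a * exp (- a) = exp (a + - a)" by (rule exp_add[symmetric])
  thus ?thesis by simp
qed

lemma exp_cancel: "exp (poly (p::complex poly) z) * exp (- poly p z) = 1" "exp (- poly p z) * exp (poly p z) = 1"
  using exp_cancel1[of "poly p z"] by (auto simp: mult.commute)

lemma s2:
  assumes U: "U \<in> classS" and u: "u \<in> U"
  shows "(\<lambda>z. exp (poly p z) * poly u z) \<in> H_closure (gamma_act p U)"
  unfolding H_closure_iff
proof (intro conjI allI impI)
  obtain rho where rho: "rho \<noteq> 0" "\<forall>q. rho * q \<in> U" using classS_props(1)[OF U] by blast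
  have add: "\<forall>u\<in>U. \<forall>v\<in>U. u + v \<in> U" using classS_props(2)[OF U] .
  have eF: "entire (\<lambda>z. exp (poly p z) * poly u z)" unfolding entire_def by (intro holomorphic_intros)
  thus "entire (\<lambda>z. exp (poly p z) * poly u z)" .
  obtain r h where rh: "entire h" "\<forall>z. exp (poly p z) * poly u z = poly r z + poly rho z * h z"
    using herm[OF rho(1) eF] by blast
  fix K :: "complex set" and e :: real assume K: "compact K" and e: "e > 0"
  obtain M where M: "M > 0" "\<forall>z\<in>K. norm (poly rho z) \<le> M"
    using compact_bound[OF K entire_cont[OF entire_poly, of K rho]] by blast
  have eM: "e / M > 0" using e M(1) by simp
  obtain t where t: "\<forall>z\<in>K. norm (h z - poly t z) < e / M" using poly_approx[OF rh(1) K eM] by blast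
  define q where "q = r + rho * t"
  define k where "k = (\<lambda>z. exp (- poly p z) * (poly t z - h z))"
  have ek: "entire k" unfolding k_def using rh(1) unfolding entire_def by (intro holomorphic_intros) auto
  have feq: "(\<lambda>z. exp (- poly p z) * poly q z) = (\<lambda>z. poly u z + poly rho z * k z)"
  proof
    fix z
    have r_eq: "poly r z = exp (poly p z) * poly u z - poly rho z * h z"
      using rh(2)[rule_format, of z] by (simp add: eq_diff_eq)
    have pq: "poly q z = exp (poly p z) * poly u z + poly rho z * (poly t z - h z)"
      unfolding q_def by (simp add: r_eq algebra_simps)
    have "exp (- poly p z) * poly q z = (exp (- poly p z) * exp (poly p z)) * poly u z + poly rho z * k z"
      unfolding pq k_def by (simp add: algebra_simps)
    thus "exp (- poly p z) * poly q z = poly u z + poly rho z * k z" using exp_cancel(2)[of p z] by simp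
  qed
  have "q \<in> gamma_act p U"
    unfolding gamma_act_def
  proof (intro CollectI bexI allI)
    show "(\<lambda>z. exp (- poly p z) * poly q z) \<in> H_closure U" unfolding feq by (rule s1[OF add rho(2) u ek])
    show "poly q z = exp (poly p z) * (exp (- poly p z) * poly q z)" for z
      using exp_cancel(1)[of p z] by (simp add: mult.assoc[symmetric])
  qed
  moreover have "\<forall>z\<in>K. norm (exp (poly p z) * poly u z - poly q z) < e"
  proof
    fix z assume z: "z \<in> K"
    have "exp (poly p z) * poly u z - poly q z = poly rho z * (h z - poly t z)"
      using rh(2) unfolding q_def by (simp add: algebra_simps)
    hence "norm (exp (poly p z) * poly u z - poly q z) = norm (poly rho z) * norm (h z - poly t z)"
      by (simp add: norm_mult)
    also have "\<dots> \<le> M * norm (h z - poly t z)" using M(2) z by (intro mult_right_mono) auto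
    also have "\<dots> < M * (e / M)" using t z M(1) by (intro mult_strict_left_mono) auto
    also have "\<dots> = e" using M(1) by simp
    finally show "norm (exp (poly p z) * poly u z - poly q z) < e" .
  qed
  ultimately show "\<exists>v\<in>gamma_act p U. \<forall>z\<in>K. norm (exp (poly p z) * poly u z - poly v z) < e" by blast
qed

lemma s3:
  assumes V: "V \<in> classS" and g: "g \<in> H_closure (gamma_act p V)"
    and w: "\<forall>z. g z = exp (poly p z) * poly w z"
  shows "w \<in> V"
proof (rule pclosedD[OF classS_closed[OF V]])
  fix K :: "complex set" and e :: real assume K: "compact K" and e: "e > 0"
  obtain M where M: "M > 0" "\<forall>z\<in>K. norm (exp (- poly p z)) \<le> M"
    using compact_bound[OF K entire_cont[OF entire_exp_poly, of K "-p"]] by auto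
  obtain q where q: "q \<in> gamma_act p V" "\<forall>z\<in>K. norm (g z - poly q z) < e / (2 * M)"
    using g unfolding H_closure_iff using K e M(1) by (metis divide_pos_pos mult_pos_pos zero_less_numeral)
  obtain f where f: "f \<in> H_closure V" "\<forall>z. poly q z = exp (poly p z) * f z"
    using q(1) unfolding gamma_act_def by blast
  obtain v where v: "v \<in> V" "\<forall>z\<in>K. norm (f z - poly v z) < e / 2"
    using f(1) unfolding H_closure_iff using K e by (metis half_gt_zero)
  have "\<forall>z\<in>K. norm (poly w z - poly v z) < e"
  proof
    fix z assume z: "z \<in> K"
    have "poly w z - f z = exp (- poly p z) * (g z - poly q z)"
    proof -
      have "exp (- poly p z) * (g z - poly q z) = exp (- poly p z) * exp (poly p z) * (poly w z - f z)"
        using w f(2) by (simp add: algebra_simps)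
      thus ?thesis using exp_cancel(2)[of p z] by simp
    qed
    hence "norm (poly w z - f z) = norm (exp (- poly p z)) * norm (g z - poly q z)" by (simp add: norm_mult)
    also have "\<dots> \<le> M * norm (g z - poly q z)" using M(2) z by (intro mult_right_mono) auto
    also have "\<dots> \<le> M * (e / (2 * M))" using q(2) z M(1) by (intro mult_left_mono) (auto simp: less_imp_le)
    also have "\<dots> = e / 2" using M(1) by simp
    finally have a: "norm (poly w z - f z) \<le> e / 2" .
    have b: "norm (f z - poly v z) < e / 2" using v(2) z by blast
    have "norm (poly w z - poly v z) \<le> norm (poly w z - f z) + norm (f z - poly v z)"
      using norm_triangle_ineq[of "poly w z - f z" "f z - poly v z"] by simp
    thus "norm (poly w z - poly v z) < e" using a b by linarith
  qed
  thus "\<exists>v\<in>V. \<forall>z\<in>K. norm (poly w z - poly v z) < e" using v(1) by blast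
qed



primrec Pd :: "complex poly \<Rightarrow> nat \<Rightarrow> complex poly" where
  "Pd q 0 = 1"
| "Pd q (Suc m) = pderiv (Pd q m) + pderiv q * Pd q m"

lemma deriv_exp_poly: "(deriv ^^ m) (\<lambda>w. exp (poly q w)) = (\<lambda>w. poly (Pd q m) w * exp (poly q w))"
proof (induction m)
  case 0
  show ?case by simp
next
  case (Suc m)
  have "deriv (\<lambda>w. poly (Pd q m) w * exp (poly q w)) = (\<lambda>w. poly (Pd q (Suc m)) w * exp (poly q w))"
  proof (rule ext, rule DERIV_imp_deriv)
    fix x
    have d1: "((\<lambda>w. poly (Pd q m) w) has_field_derivative poly (pderiv (Pd q m)) x) (at x)" by (rule poly_DERIV)
    have d2: "((\<lambda>w. exp (poly q w)) has_field_derivative exp (poly q x) * poly (pderiv q) x) (at x)"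
      by (rule DERIV_chain2[OF DERIV_exp poly_DERIV])
    have d: "((\<lambda>w. poly (Pd q m) w * exp (poly q w)) has_field_derivative
        poly (pderiv (Pd q m)) x * exp (poly q x) + exp (poly q x) * poly (pderiv q) x * poly (Pd q m) x) (at x)"
      using DERIV_mult[OF d1 d2] .
    have eq: "poly (pderiv (Pd q m)) x * exp (poly q x) + exp (poly q x) * poly (pderiv q) x * poly (Pd q m) x
        = poly (Pd q (Suc m)) x * exp (poly q x)" by (simp add: algebra_simps)
    show "((\<lambda>w. poly (Pd q m) w * exp (poly q w)) has_field_derivative poly (Pd q (Suc m)) x * exp (poly q x)) (at x)"
      using d unfolding eq .
  qed
  thus ?case using Suc by simp
qed

lemma sum_swap_tri:
  "(\<Sum>k\<le>(N::nat). \<Sum>i\<le>k. g k i) = (\<Sum>i\<le>N. \<Sum>k\<in>{i..N}. (g k i :: 'a::comm_monoid_add))"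
proof -
  have "(\<Sum>k\<le>N. \<Sum>i\<le>k. g k i) = (\<Sum>k\<in>{..N}. \<Sum>i\<in>{i. i \<in> {..N} \<and> i \<le> k}. g k i)"
    by (intro sum.cong) (auto intro: order_trans)
  also have "\<dots> = (\<Sum>i\<in>{..N}. \<Sum>k\<in>{k. k \<in> {..N} \<and> i \<le> k}. g k i)"
    by (rule sum.swap_restrict) auto
  also have "\<dots> = (\<Sum>i\<le>N. \<Sum>k\<in>{i..N}. g k i)"
    by (intro sum.cong) auto
  finally show ?thesis .
qed

definition cE :: "complex poly \<Rightarrow> diffop \<Rightarrow> nat \<Rightarrow> complex poly fract" where
  "cE p D j = (\<Sum>k\<in>{j..degree D}. coeff D k * to_fract (smult (of_nat (k choose j)) (Pd (-p) (k - j))))"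

definition Econj :: "complex poly \<Rightarrow> diffop \<Rightarrow> diffop" where
  "Econj p D = (\<Sum>j\<le>degree D. monom (cE p D j) j)"

lemma coeff_Econj: "coeff (Econj p D) j = (if j \<le> degree D then cE p D j else 0)"
  unfolding Econj_def by (simp add: coeff_sum coeff_monom)

lemma degree_Econj: "degree (Econj p D) \<le> degree D"
  by (rule degree_le) (simp add: coeff_Econj)

lemma rat_eval_cE:
  assumes "op_regular_at D z"
  shows "rat_eval (cE p D j) z = (\<Sum>k\<in>{j..degree D}. rat_eval (coeff D k) z * (of_nat (k choose j) * poly (Pd (-p) (k - j)) z))"
proof -
  have reg: "\<not> rat_pole (coeff D k) z" for k using assms unfolding op_regular_at_def by auto
  have each: "\<not> rat_pole (coeff D k * to_fract (smult (of_nat (k choose j)) (Pd (-p) (k - j)))) z \<and>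
     rat_eval (coeff D k * to_fract (smult (of_nat (k choose j)) (Pd (-p) (k - j)))) z =
     rat_eval (coeff D k) z * (of_nat (k choose j) * poly (Pd (-p) (k - j)) z)" for k
    using rat_eval_mult[OF reg rat_eval_to_fract[THEN conjunct1]] rat_eval_to_fract by simp
  show ?thesis unfolding cE_def
    using rat_eval_sum[of "{j..degree D}" "\<lambda>k. coeff D k * to_fract (smult (of_nat (k choose j)) (Pd (-p) (k - j)))" z] each
    by simp
qed

lemma deriv_conj:
  assumes f: "entire f"
  shows "(deriv ^^ k) (\<lambda>w. exp (- poly p w) * f w) z * exp (poly p z) =
     (\<Sum>i\<le>k. of_nat (k choose i) * poly (Pd (-p) (k - i)) z * (deriv ^^ i) f z)"
proof -
  have fe: "(\<lambda>w. exp (- poly p w) * f w) = (\<lambda>w. f w * exp (poly (-p) w))"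
    by (rule ext) (simp add: mult.commute)
  have h1: "f holomorphic_on UNIV" using f unfolding entire_def .
  have h2: "(\<lambda>w. exp (poly (-p) w)) holomorphic_on UNIV" by (intro holomorphic_intros)
  have "(deriv ^^ k) (\<lambda>w. f w * exp (poly (-p) w)) z =
      (\<Sum>i = 0..k. of_nat (k choose i) * (deriv ^^ i) f z * (deriv ^^ (k - i)) (\<lambda>w. exp (poly (-p) w)) z)"
    by (rule higher_deriv_mult[OF h1 h2]) auto
  also have "\<dots> = (\<Sum>i\<le>k. of_nat (k choose i) * (deriv ^^ i) f z * (poly (Pd (-p) (k - i)) z * exp (poly (-p) z)))"
    using deriv_exp_poly[of _ "-p"] by (simp add: atLeast0AtMost)
  finally have "(deriv ^^ k) (\<lambda>w. exp (- poly p w) * f w) z * exp (poly p z) =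
      (\<Sum>i\<le>k. of_nat (k choose i) * (deriv ^^ i) f z * (poly (Pd (-p) (k - i)) z * exp (poly (-p) z))) * exp (poly p z)"
    unfolding fe by simp
  also have "\<dots> = (\<Sum>i\<le>k. of_nat (k choose i) * poly (Pd (-p) (k - i)) z * (deriv ^^ i) f z * (exp (- poly p z) * exp (poly p z)))"
    unfolding sum_distrib_right by (intro sum.cong) (auto simp: algebra_simps)
  also have "\<dots> = (\<Sum>i\<le>k. of_nat (k choose i) * poly (Pd (-p) (k - i)) z * (deriv ^^ i) f z)"
    using exp_cancel(2)[of p z] by simp
  finally show ?thesis .
qed

lemma conj_exists: "conj_op p D (Econj p D)"
  unfolding conj_op_def
proof (intro allI impI)
  fix f z assume f: "entire f" and rz: "op_regular_at D z \<and> op_regular_at (Econj p D) z"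
  hence r: "op_regular_at D z" by simp
  define N where "N = degree D"
  define a where "a = (\<lambda>k i. rat_eval (coeff D k) z * (of_nat (k choose i) * poly (Pd (-p) (k - i)) z) * (deriv ^^ i) f z)"
  have "op_eval (Econj p D) f z = (\<Sum>j\<le>N. rat_eval (coeff (Econj p D) j) z * (deriv ^^ j) f z)"
    using op_eval_ext[OF degree_Econj] unfolding N_def .
  also have "\<dots> = (\<Sum>j\<le>N. \<Sum>k\<in>{j..N}. a k j)"
    by (intro sum.cong refl) (simp add: coeff_Econj rat_eval_cE[OF r] N_def a_def sum_distrib_right)
  also have "\<dots> = (\<Sum>k\<le>N. \<Sum>i\<le>k. a k i)" by (rule sum_swap_tri[symmetric])
  also have "\<dots> = exp (poly p z) * op_eval D (\<lambda>w. exp (- poly p w) * f w) z"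
  proof -
    have "exp (poly p z) * op_eval D (\<lambda>w. exp (- poly p w) * f w) z =
        (\<Sum>k\<le>N. rat_eval (coeff D k) z * ((deriv ^^ k) (\<lambda>w. exp (- poly p w) * f w) z * exp (poly p z)))"
      unfolding op_eval_def N_def sum_distrib_left by (intro sum.cong) (auto simp: algebra_simps)
    also have "\<dots> = (\<Sum>k\<le>N. \<Sum>i\<le>k. a k i)"
      unfolding deriv_conj[OF f] a_def sum_distrib_left by (intro sum.cong refl) (simp add: algebra_simps)
    finally show ?thesis by simp
  qed
  finally show "op_eval (Econj p D) f z = exp (poly p z) * op_eval D (\<lambda>w. exp (- poly p w) * f w) z" .
qed

lemma conj_sym:
  assumes "conj_op q D E"
  shows "conj_op (-q) E D"
  unfolding conj_op_def
proof (intro allI impI)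
  fix f z assume f: "entire f" and rz: "op_regular_at E z \<and> op_regular_at D z"
  have ef: "entire (\<lambda>w. exp (poly q w) * f w)" using f unfolding entire_def by (intro holomorphic_intros) auto
  have fe: "(\<lambda>w. exp (- poly q w) * (exp (poly q w) * f w)) = f"
    by (rule ext) (simp add: mult.assoc[symmetric] exp_cancel(2))
  have "op_eval E (\<lambda>w. exp (poly q w) * f w) z =
      exp (poly q z) * op_eval D (\<lambda>w. exp (- poly q w) * (exp (poly q w) * f w)) z"
    using assms ef rz unfolding conj_op_def by blast
  hence "op_eval E (\<lambda>w. exp (poly q w) * f w) z = exp (poly q z) * op_eval D f z"
    by (simp only: fe)
  hence "exp (- poly q z) * op_eval E (\<lambda>w. exp (poly q w) * f w) z = op_eval D f z"
    by (simp add: mult.assoc[symmetric] exp_cancel(2))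
  thus "op_eval D f z = exp (poly (- q) z) * op_eval E (\<lambda>w. exp (- poly (- q) w) * f w) z" by simp
qed



lemma cont_exp_mult: "entire g \<Longrightarrow> continuous_on UNIV (\<lambda>z. exp (poly p z) * g z)"
  by (intro continuous_intros entire_cont)

theorem corollary2p3:
  fixes U V :: "complex poly set" and p :: "complex poly"
  assumes "U \<in> classS" and "V \<in> classS"
  shows "Dops (gamma_act p U) (gamma_act p V) = {E. \<exists>D\<in>Dops U V. conj_op p D E}"
proof
  show "Dops (gamma_act p U) (gamma_act p V) \<subseteq> {E. \<exists>D\<in>Dops U V. conj_op p D E}"
  proof
    fix E assume E: "E \<in> Dops (gamma_act p U) (gamma_act p V)"
    define D where "D = Econj (-p) E"
    have cD: "conj_op (-p) E D" unfolding D_def by (rule conj_exists)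
    have cDE: "conj_op p D E" using conj_sym[OF cD] by simp
    have "D \<in> Dops U V"
      unfolding Dops_def
    proof (intro CollectI ballI)
      fix u assume u: "u \<in> U"
      define G where "G = (\<lambda>z. exp (poly p z) * poly u z)"
      have G: "G \<in> H_closure (gamma_act p U)" unfolding G_def by (rule s2[OF assms(1) u])
      obtain g where g: "g \<in> H_closure (gamma_act p V)" "\<forall>z. op_regular_at E z \<longrightarrow> g z = op_eval E G z"
        using dext[OF E G] by blast
      have eg: "entire g" using g(1) H_closure_iff by blast
      define Z where "Z = {z. \<not> op_regular_at D z} \<union> {z. \<not> op_regular_at E z}"
      have finZ: "finite Z" unfolding Z_def using finite_nonreg by simp
      have key: "\<forall>z. z \<notin> Z \<longrightarrow> \<not> rat_pole (op_apply D u) z \<and> rat_eval (op_apply D u) z = exp (poly (-p) z) * g z"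
      proof (intro allI impI)
        fix z assume "z \<notin> Z"
        hence rD: "op_regular_at D z" and rE: "op_regular_at E z" unfolding Z_def by auto
        have Gf: "(\<lambda>w. exp (- poly (- p) w) * poly u w) = G" unfolding G_def by simp
        have "op_eval D (poly u) z = exp (poly (-p) z) * op_eval E (\<lambda>w. exp (- poly (- p) w) * poly u w) z"
          using cD rD rE unfolding conj_op_def by auto
        also have "\<dots> = exp (poly (-p) z) * g z" unfolding Gf using g(2) rE by simp
        finally show "\<not> rat_pole (op_apply D u) z \<and> rat_eval (op_apply D u) z = exp (poly (-p) z) * g z"
          using op_apply_eval[OF rD, of u] by simp
      qed
      obtain w where w: "op_apply D u = to_fract w" "\<forall>z. poly w z = exp (poly (-p) z) * g z"
        using fract_poly[OF finZ cont_exp_mult[OF eg] key] by blast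
      have "\<forall>z. g z = exp (poly p z) * poly w z"
      proof
        fix z
        have "exp (poly p z) * poly w z = (exp (poly p z) * exp (- poly p z)) * g z"
          using w(2) by (simp add: mult.assoc)
        thus "g z = exp (poly p z) * poly w z" using exp_cancel(1)[of p z] by simp
      qed
      hence "w \<in> V" using s3[OF assms(2) g(1)] by blast
      thus "\<exists>v\<in>V. op_apply D u = to_fract v" using w(1) by blast
    qed
    thus "E \<in> {E. \<exists>D\<in>Dops U V. conj_op p D E}" using cDE by blast
  qed
next
  show "{E. \<exists>D\<in>Dops U V. conj_op p D E} \<subseteq> Dops (gamma_act p U) (gamma_act p V)"
  proof
    fix E assume "E \<in> {E. \<exists>D\<in>Dops U V. conj_op p D E}"
    then obtain D where D: "D \<in> Dops U V" "conj_op p D E" by blast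
    show "E \<in> Dops (gamma_act p U) (gamma_act p V)"
      unfolding Dops_def
    proof (intro CollectI ballI)
      fix q assume "q \<in> gamma_act p U"
      then obtain f where f: "f \<in> H_closure U" "\<forall>z. poly q z = exp (poly p z) * f z"
        unfolding gamma_act_def by blast
      obtain g where g: "g \<in> H_closure V" "\<forall>z. op_regular_at D z \<longrightarrow> g z = op_eval D f z"
        using dext[OF D(1) f(1)] by blast
      have eg: "entire g" using g(1) H_closure_iff by blast
      define Z where "Z = {z. \<not> op_regular_at D z} \<union> {z. \<not> op_regular_at E z}"
      have finZ: "finite Z" unfolding Z_def using finite_nonreg by simp
      have qf: "(\<lambda>w. exp (- poly p w) * poly q w) = f"
      proof
        fix w
        have "exp (- poly p w) * poly q w = (exp (- poly p w) * exp (poly p w)) * f w"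
          using f(2) by (simp add: mult.assoc)
        thus "exp (- poly p w) * poly q w = f w" using exp_cancel(2)[of p w] by simp
      qed
      have key: "\<forall>z. z \<notin> Z \<longrightarrow> \<not> rat_pole (op_apply E q) z \<and> rat_eval (op_apply E q) z = exp (poly p z) * g z"
      proof (intro allI impI)
        fix z assume "z \<notin> Z"
        hence rD: "op_regular_at D z" and rE: "op_regular_at E z" unfolding Z_def by auto
        have "op_eval E (poly q) z = exp (poly p z) * op_eval D (\<lambda>w. exp (- poly p w) * poly q w) z"
          using D(2) rD rE unfolding conj_op_def by auto
        also have "\<dots> = exp (poly p z) * g z" unfolding qf using g(2) rD by simp
        finally show "\<not> rat_pole (op_apply E q) z \<and> rat_eval (op_apply E q) z = exp (poly p z) * g z"
          using op_apply_eval[OF rE, of q] by simp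
      qed
      obtain v where v: "op_apply E q = to_fract v" "\<forall>z. poly v z = exp (poly p z) * g z"
        using fract_poly[OF finZ cont_exp_mult[OF eg] key] by blast
      have "v \<in> gamma_act p V" unfolding gamma_act_def using g(1) v(2) by blast
      thus "\<exists>v\<in>gamma_act p V. op_apply E q = to_fract v" using v(1) by blast
    qed
  qed
qed


end
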